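(* Suppose that $(M,d,\mu)$ satisfies $\mathrm{VD}(d_2)$ and $\mathrm{Diff}(F)$, where $F:(0,\infty)\to(0,\infty)$ is strictly increasing and satisfies $L(\gamma_1,c_F^{-1})$ and $U(\gamma_2,c_F)$ with $1<\gamma_1\le\gamma_2$, and let $q(t,x,y)$ be the transition density of the diffusion in $\mathrm{Diff}(F)$. Let $\psi$ be non-decreasing satisfying $L(\beta_1,C_L)$, $U(\beta_2,C_U)$ and $\int_0^1\frac{dF(s)}{\psi(s)}<\infty$. Define $$\mathcal J_\psi(x,y):=\int_0^\infty q(t,x,y)\frac{1}{t\,\psi(F^{-1}(t))}\,dt .$$ Then there is $\bar C>1$ such that for all $x,y\in M$ with $x\ne y$, $$\frac{\bar C^{-1}}{V(x,d(x,y))\psi(d(x,y))}\le\mathcal J_\psi(x,y)\le\frac{\bar C}{V(x,d(x,y))\psi(d(x,y))}.$$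
   Context: $(M,d)$ is a locally compact separable metric space with relatively compact balls, $\mu$ a positive Radon measure with full support, $\mu(M)=\infty$; $B(x,r)=\{y:d(x,y)<r\}$, $V(x,r)=\mu(B(x,r))$. $\mathrm{VD}(d_2)$: there is $C_\mu\ge1$ with $V(x,R)/V(x,r)\le C_\mu(R/r)^{d_2}$ for all $x$, $0<r\le R$. $g$ satisfies $L(\beta,c)$ (resp. $U(\beta,C)$) if $g(R)/g(r)\ge c(R/r)^\beta$ (resp. $\le C(R/r)^\beta$) for all $0<r\le R$; $0<\beta_1\le\beta_2$. $F_1(r,t)=\sup_{s>0}[r/s-t/F(s)]$. $\mathrm{Diff}(F)$: there is a conservative $\mu$-symmetric diffusion process $Z$ on $M$ with transition density $q(t,x,y)$ w.r.t. $\mu$ and constants $c\ge1$, $a_0>0$ such that $\frac{c^{-1}}{V(x,F^{-1}(t))}\mathbf 1_{\{F(d(x,y))\le t\}}\le q(t,x,y)\le\frac{c}{V(x,F^{-1}(t))}\exp(-a_0F_1(d(x,y),t))$ for all $t>0$, $x,y\in M$. ($\mathcal J_\psi$ is the jump kernel of the subordinate process $Z_{S_t}$, with $S$ an independent subordinator of Laplace exponent $\lambda\mapsto\int_0^\infty(1-e^{-\lambda t})\frac{dt}{t\psi(F^{-1}(t))}$.) *)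

theory Defs
  imports "HOL-Analysis.Analysis"
begin

definition V :: "'a::metric_space measure \<Rightarrow> 'a \<Rightarrow> real \<Rightarrow> real" where
  "V \<mu> x r = measure \<mu> (ball x r)"

definition VD :: "'a::metric_space measure \<Rightarrow> real \<Rightarrow> bool" where
  "VD \<mu> d2 \<longleftrightarrow> (\<exists>C\<ge>1. \<forall>x r R. 0 < r \<longrightarrow> r \<le> R \<longrightarrow>
       V \<mu> x R / V \<mu> x r \<le> C * (R / r) powr d2)"

definition L_scale :: "real \<Rightarrow> real \<Rightarrow> (real \<Rightarrow> real) \<Rightarrow> bool" where
  "L_scale \<beta> c g \<longleftrightarrow> (\<forall>r R. 0 < r \<longrightarrow> r \<le> R \<longrightarrow> g R / g r \<ge> c * (R / r) powr \<beta>)"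

definition U_scale :: "real \<Rightarrow> real \<Rightarrow> (real \<Rightarrow> real) \<Rightarrow> bool" where
  "U_scale \<beta> C g \<longleftrightarrow> (\<forall>r R. 0 < r \<longrightarrow> r \<le> R \<longrightarrow> g R / g r \<le> C * (R / r) powr \<beta>)"

text \<open>Inverse of the strictly increasing F (generalized inverse; equals the
  usual inverse when F is a bijection of (0,infinity)).\<close>
definition Finv :: "(real \<Rightarrow> real) \<Rightarrow> real \<Rightarrow> real" where
  "Finv F t = Sup {s. 0 < s \<and> F s \<le> t}"

definition F1 :: "(real \<Rightarrow> real) \<Rightarrow> real \<Rightarrow> real \<Rightarrow> real" where
  "F1 F r t = (SUP s\<in>{0<..}. r / s - t / F s)"

text \<open>Diff(F): q is the transition density (w.r.t. mu) of a conservative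
  mu-symmetric Markov semigroup satisfying the two-sided bounds.
  (Path continuity of the process is not expressible.)\<close>
definition Diff :: "'a::metric_space measure \<Rightarrow> (real \<Rightarrow> real) \<Rightarrow>
    (real \<Rightarrow> 'a \<Rightarrow> 'a \<Rightarrow> real) \<Rightarrow> bool" where
  "Diff \<mu> F q \<longleftrightarrow>
     (\<forall>t x y. 0 < t \<longrightarrow> 0 \<le> q t x y) \<and>
     (\<forall>t x y. 0 < t \<longrightarrow> q t x y = q t y x) \<and>
     (\<forall>x y. (\<lambda>t. q t x y) \<in> borel_measurable borel) \<and>
     (\<forall>t x. 0 < t \<longrightarrow> (\<lambda>y. q t x y) \<in> borel_measurable \<mu>) \<and>
     (\<forall>t x. 0 < t \<longrightarrow> (\<integral>\<^sup>+ y. ennreal (q t x y) \<partial>\<mu>) = 1) \<and>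
     (\<forall>t s x y. 0 < t \<longrightarrow> 0 < s \<longrightarrow>
        ennreal (q (t + s) x y) = (\<integral>\<^sup>+ z. ennreal (q t x z * q s z y) \<partial>\<mu>)) \<and>
     (\<exists>c\<ge>1. \<exists>a0>0. \<forall>t x y. 0 < t \<longrightarrow>
        (if F (dist x y) \<le> t then 1 else 0) / (c * V \<mu> x (Finv F t)) \<le> q t x y \<and>
        q t x y \<le> c / V \<mu> x (Finv F t) * exp (- a0 * F1 F (dist x y) t))"

text \<open>Right-continuous regularisation of F (extended by 0 on (-infinity,0]),
  whose Lebesgue--Stieltjes measure is the measure dF.\<close>
definition F_rc :: "(real \<Rightarrow> real) \<Rightarrow> real \<Rightarrow> real" where
  "F_rc F s = (if s \<le> 0 then 0 else Inf (F ` {s<..}))"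

definition stieltjes_int01 :: "(real \<Rightarrow> real) \<Rightarrow> (real \<Rightarrow> real) \<Rightarrow> ennreal" where
  "stieltjes_int01 F \<psi> = (\<integral>\<^sup>+ s\<in>{0<..1}. ennreal (1 / \<psi> s) \<partial>(interval_measure (F_rc F)))"

definition Jpsi :: "(real \<Rightarrow> 'a \<Rightarrow> 'a \<Rightarrow> real) \<Rightarrow> (real \<Rightarrow> real) \<Rightarrow> (real \<Rightarrow> real)
    \<Rightarrow> 'a \<Rightarrow> 'a \<Rightarrow> ennreal" where
  "Jpsi q F \<psi> x y = (\<integral>\<^sup>+ t\<in>{0<..}. ennreal (q t x y / (t * \<psi> (Finv F t))) \<partial>lborel)"

end

theory Submission imports Defs begin

lemma Lsc:
  assumes "L_scale \<beta> c g" "\<And>s. 0 < s \<Longrightarrow> 0 < g s" "0 < r" "r \<le> R"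
  shows "c * (R / r) powr \<beta> * g r \<le> g R"
proof -
  have "c * (R / r) powr \<beta> \<le> g R / g r" using assms unfolding L_scale_def by blast
  moreover have "0 < g r" using assms by auto
  ultimately show ?thesis by (simp add: pos_le_divide_eq)
qed

lemma Usc:
  assumes "U_scale \<beta> c g" "\<And>s. 0 < s \<Longrightarrow> 0 < g s" "0 < r" "r \<le> R"
  shows "g R \<le> c * (R / r) powr \<beta> * g r"
proof -
  have "g R / g r \<le> c * (R / r) powr \<beta>" using assms unfolding U_scale_def by blast
  moreover have "0 < g r" using assms by auto
  ultimately show ?thesis by (simp add: pos_divide_le_eq)
qed

lemma Lsc_le1:
  assumes "L_scale \<beta> c g" "\<And>s. 0 < s \<Longrightarrow> 0 < g s"
  shows "c \<le> 1"
  using Lsc[OF assms, of 1 1] assms(2)[of 1] by simp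

lemma Usc_ge1:
  assumes "U_scale \<beta> c g" "\<And>s. 0 < s \<Longrightarrow> 0 < g s"
  shows "1 \<le> c"
  using Usc[OF assms, of 1 1] assms(2)[of 1] by simp

lemma powr_le_from_root:
  fixes x y g :: real
  assumes "0 < g" "0 \<le> x" "0 \<le> y" "x \<le> y powr (1/g)"
  shows "x powr g \<le> y"
proof -
  have "x powr g \<le> (y powr (1/g)) powr g" using assms by (intro powr_mono2) auto
  also have "\<dots> = y" using assms by (simp add: powr_powr)
  finally show ?thesis .
qed

lemma powr_ge_from_root:
  fixes x y g :: real
  assumes "0 < g" "0 \<le> x" "0 \<le> y" "y powr (1/g) \<le> x"
  shows "y \<le> x powr g"
proof -
  have "y = (y powr (1/g)) powr g" using assms by (simp add: powr_powr)
  also have "\<dots> \<le> x powr g" using assms by (intro powr_mono2) auto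
  finally show ?thesis .
qed

lemma exp_poly_bound:
  fixes b th p :: real
  assumes "0 < b" "0 < th"
  shows "\<exists>K>0. \<forall>w\<ge>1. w powr p \<le> K * exp (b * w powr th)"
proof -
  define n :: nat where "n = nat \<lceil>p / th\<rceil> + 1"
  have n: "p / th \<le> real n" "0 < n" unfolding n_def
    using real_nat_ceiling_ge[of "p/th"] by auto
  define K where "K = (real n / b) ^ n"
  have Kpos: "K > 0" using assms n by (simp add: K_def)
  have "w powr p \<le> K * exp (b * w powr th)" if w: "w \<ge> 1" for w
  proof -
    have "p \<le> th * real n" using n assms by (simp add: divide_le_eq mult.commute)
    then have "w powr p \<le> w powr (th * real n)" using w by (intro powr_mono) auto
    also have "\<dots> = (w powr th) ^ n" using w by (simp add: powr_powr[symmetric] powr_realpow)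
    also have "\<dots> = K * (b * w powr th / real n) ^ n"
      using n assms by (simp add: K_def power_divide power_mult_distrib field_simps)
    also have "(b * w powr th / real n) ^ n \<le> exp (b * w powr th / real n) ^ n"
    proof (rule power_mono)
      show "b * w powr th / real n \<le> exp (b * w powr th / real n)"
        using exp_ge_add_one_self[of "b * w powr th / real n"] by linarith
    qed (use assms w in auto)
    also have "exp (b * w powr th / real n) ^ n = exp (b * w powr th)"
      using n by (simp add: exp_of_nat_mult[symmetric])
    finally show ?thesis using Kpos by (simp add: mult_left_mono)
  qed
  then show ?thesis using Kpos by blast
qed

locale Fctx =
  fixes F :: "real \<Rightarrow> real" and cF g1 g2 :: real
  assumes F_pos: "\<And>s. 0 < s \<Longrightarrow> 0 < F s"
    and F_strict: "strict_mono_on {0<..} F"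
    and cF: "0 < cF"
    and gam: "1 < g1" "g1 \<le> g2"
    and F_L: "L_scale g1 (1 / cF) F"
    and F_U: "U_scale g2 cF F"
begin

lemma cF1: "1 \<le> cF" using Usc_ge1[OF F_U F_pos] .

lemma FL: "0 < r \<Longrightarrow> r \<le> R \<Longrightarrow> (1/cF) * (R/r) powr g1 * F r \<le> F R"
  using Lsc[OF F_L F_pos] by blast

lemma FU: "0 < r \<Longrightarrow> r \<le> R \<Longrightarrow> F R \<le> cF * (R/r) powr g2 * F r"
  using Usc[OF F_U F_pos] by blast

lemma F_big: "\<exists>S>0. t < F S"
proof -
  define X where "X = cF * (\<bar>t\<bar> + 1) / F 1"
  have X: "0 < X" using cF F_pos[of 1] by (simp add: X_def)
  define S where "S = max 1 (X powr (1/g1))"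
  have S1: "1 \<le> S" by (simp add: S_def)
  have "X \<le> S powr g1" using gam X by (intro powr_ge_from_root) (auto simp: S_def)
  have "(1/cF) * (S/1) powr g1 * F 1 \<le> F S" using FL[OF _ S1] by simp
  moreover have "(1/cF) * X * F 1 \<le> (1/cF) * (S/1) powr g1 * F 1"
    using \<open>X \<le> S powr g1\<close> cF F_pos[of 1] by (intro mult_right_mono mult_left_mono) auto
  moreover have "(1/cF) * X * F 1 = \<bar>t\<bar> + 1" using cF F_pos[of 1] by (simp add: X_def)
  ultimately have "t < F S" by linarith
  moreover have "S > 0" using S1 by linarith
  ultimately show ?thesis by blast
qed

lemma F_small: "0 < t \<Longrightarrow> \<exists>s>0. F s \<le> t"
proof -
  assume t: "0 < t"
  define Y where "Y = t / (cF * F 1)"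
  have Y: "0 < Y" using cF F_pos[of 1] t by (simp add: Y_def)
  define s where "s = min 1 (Y powr (1/g1))"
  have s0: "0 < s" "s \<le> 1" using Y by (auto simp: s_def)
  have sY: "s powr g1 \<le> Y" using gam Y s0 by (intro powr_le_from_root) (auto simp: s_def)
  have "(1/cF) * (1/s) powr g1 * F s \<le> F 1" using FL[OF s0] by simp
  then have "F s \<le> cF * s powr g1 * F 1"
    using cF s0 F_pos[of s] by (simp add: powr_divide field_simps)
  also have "\<dots> \<le> cF * Y * F 1" using sY cF F_pos[of 1] by (intro mult_right_mono mult_left_mono) auto
  also have "\<dots> = t" using cF F_pos[of 1] by (simp add: Y_def)
  finally show ?thesis using s0 by blast
qed

lemma Finv_bdd: "bdd_above {s. 0 < s \<and> F s \<le> t}"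
proof -
  obtain S where S: "S > 0" "t < F S" using F_big by blast
  have "s \<le> S" if "0 < s" "F s \<le> t" for s
  proof (rule ccontr)
    assume "\<not> s \<le> S"
    then have "F S < F s" using strict_mono_onD[OF F_strict, of S s] S that by auto
    then show False using S that by auto
  qed
  then show ?thesis by (auto intro!: bdd_aboveI)
qed

lemma Finv_ge: "0 < s \<Longrightarrow> F s \<le> t \<Longrightarrow> s \<le> Finv F t"
  unfolding Finv_def by (rule cSup_upper) (auto intro: Finv_bdd)

lemma Finv_le:
  assumes "0 < t" "0 < S" "t < F S"
  shows "Finv F t \<le> S"
proof -
  obtain s0 where "0 < s0" "F s0 \<le> t" using F_small assms by blast
  have "s \<le> S" if "0 < s" "F s \<le> t" for s
  proof (rule ccontr)
    assume "\<not> s \<le> S"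
    then have "F S < F s" using strict_mono_onD[OF F_strict, of S s] assms that by auto
    then show False using assms that by auto
  qed
  then show ?thesis unfolding Finv_def using \<open>0 < s0\<close> \<open>F s0 \<le> t\<close>
    by (intro cSup_least) auto
qed

lemma Finv_pos: "0 < t \<Longrightarrow> 0 < Finv F t"
  using F_small Finv_ge by fastforce


lemma F_le_small: "0 < s \<Longrightarrow> s \<le> 1 \<Longrightarrow> F s \<le> cF * s powr g1 * F 1"
proof -
  assume s0: "0 < s" "s \<le> 1"
  have "(1/cF) * (1/s) powr g1 * F s \<le> F 1" using FL[OF s0] by simp
  then show "F s \<le> cF * s powr g1 * F 1"
    using cF s0 F_pos[of s] by (simp add: powr_divide field_simps)
qed

lemma F1_bdd:
  assumes r: "0 \<le> r" and t: "0 < t"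
  shows "bdd_above ((\<lambda>s. r / s - t / F s) ` {0<..})"
proof -
  define A where "A = t / (cF * F 1)"
  have A: "0 < A" using cF F_pos[of 1] t by (simp add: A_def)
  define W where "W = (r / A) powr (1 / (g1 - 1))"
  have W0: "0 \<le> W" by (simp add: W_def)
  have WW: "W powr (g1 - 1) = r / A" using gam r A by (simp add: W_def powr_powr)
  have "r / s - t / F s \<le> max r (r * W)" if s: "0 < s" for s
  proof (cases "1 \<le> s")
    case True
    have "r / s \<le> r" using r True by (simp add: divide_le_eq mult_le_cancel_left1)
    moreover have "0 \<le> t / F s" using t F_pos[OF s] by simp
    ultimately show ?thesis by linarith
  next
    case False
    define w where "w = 1 / s"
    have w1: "1 < w" using False s by (simp add: w_def)
    have Fs: "F s \<le> cF * s powr g1 * F 1" using F_le_small[OF s] False by simp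
    have "A * w powr g1 = t / (cF * s powr g1 * F 1)"
      using s by (simp add: A_def w_def powr_divide field_simps)
    also have "\<dots> \<le> t / F s" using Fs t F_pos[OF s]
      by (intro divide_left_mono) auto
    finally have tF: "A * w powr g1 \<le> t / F s" .
    have rs: "r / s = r * w" by (simp add: w_def)
    show ?thesis
    proof (cases "w \<le> W")
      case True
      have "r * w \<le> r * W" using True r by (intro mult_left_mono) auto
      moreover have "0 \<le> A * w powr g1" using A by simp
      ultimately show ?thesis using tF rs by linarith
    next
      case False
      then have "W powr (g1 - 1) < w powr (g1 - 1)" using W0 gam by (intro powr_less_mono2) auto
      then have "r / A < w powr (g1 - 1)" using WW by simp
      then have "r < A * w powr (g1 - 1)" using A by (simp add: divide_less_eq mult.commute)
      then have "r * w \<le> A * w powr (g1 - 1) * w" using w1 by (intro mult_right_mono) auto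
      also have "A * w powr (g1 - 1) * w = A * w powr g1"
        using w1 by (simp add: powr_diff field_simps)
      finally show ?thesis using tF rs r W0 by (smt (verit) mult_nonneg_nonneg)
    qed
  qed
  then show ?thesis by (auto intro!: bdd_aboveI2)
qed

lemma F1_ge:
  assumes "0 \<le> r" "0 < t" "0 < s"
  shows "r / s - t / F s \<le> F1 F r t"
  unfolding F1_def using assms F1_bdd[OF assms(1,2)] by (intro cSUP_upper) auto

lemma F1_ge_m1:
  assumes "0 \<le> r" "0 < t"
  shows "-1 \<le> F1 F r t"
proof -
  obtain S where S: "S > 0" "t < F S" using F_big by blast
  have "r / S - t / F S \<le> F1 F r t" using F1_ge[OF assms S(1)] .
  moreover have "0 \<le> r / S" using assms S by simp
  moreover have "t / F S \<le> 1" using S assms by simp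
  ultimately show ?thesis by linarith
qed


lemma key_exp:
  assumes a0: "0 < a0" and p: "0 \<le> p"
  shows "\<exists>K0>0. \<forall>d t. 0 < d \<longrightarrow> 0 < t \<longrightarrow> t < F d \<longrightarrow>
           (F d / t) powr p * exp (- a0 * F1 F d t) \<le> K0"
proof -
  define th where "th = 1 / (g2 - 1)"
  have th: "0 < th" using gam by (simp add: th_def)
  obtain Ke0 where Ke0: "Ke0 > 0" "\<And>w. w \<ge> 1 \<Longrightarrow> w powr p \<le> Ke0 * exp (a0 / 2 * w powr th)"
    using exp_poly_bound[of "a0/2" th p] a0 th by auto
  define Ke where "Ke = max 1 Ke0"
  have Ke: "Ke > 0" "\<And>w. w \<ge> 1 \<Longrightarrow> w powr p \<le> Ke * exp (a0 / 2 * w powr th)" "1 \<le> Ke"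
  proof -
    show "Ke > 0" "1 \<le> Ke" by (auto simp: Ke_def)
    fix w :: real assume "w \<ge> 1"
    then have "w powr p \<le> Ke0 * exp (a0 / 2 * w powr th)" by (rule Ke0(2))
    also have "\<dots> \<le> Ke * exp (a0 / 2 * w powr th)" by (intro mult_right_mono) (auto simp: Ke_def)
    finally show "w powr p \<le> Ke * exp (a0 / 2 * w powr th)" .
  qed
  define K0 where "K0 = (2 * cF) powr p * Ke"
  have K0: "K0 > 0" using Ke cF by (simp add: K0_def)
  have "(F d / t) powr p * exp (- a0 * F1 F d t) \<le> K0"
    if d: "0 < d" and t: "0 < t" "t < F d" for d t
  proof -
    define u where "u = F d / t"
    have u1: "1 < u" using t by (simp add: u_def)
    show ?thesis
    proof (cases "u \<le> 2 * cF")
      case True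
      have "d / d - t / F d \<le> F1 F d t" using F1_ge[of d t d] d t by simp
      moreover have "t / F d < 1" using t by simp
      ultimately have "0 \<le> F1 F d t" using d by simp
      then have e: "exp (- a0 * F1 F d t) \<le> 1" using a0 by simp
      have "u powr p \<le> (2 * cF) powr p" using True u1 p by (intro powr_mono2) auto
      moreover have "(2 * cF) powr p \<le> K0"
      proof -
        have "(2 * cF) powr p * 1 \<le> (2 * cF) powr p * Ke"
        proof (rule mult_left_mono)
          show "1 \<le> Ke" by (rule Ke(3))
        qed simp
        then show ?thesis by (simp add: K0_def)
      qed
      ultimately show ?thesis using e unfolding u_def[symmetric]
        by (smt (verit) mult_left_le powr_ge_zero exp_ge_zero)
    next
      case False
      define w where "w = u / (2 * cF)"
      have w1: "1 < w" using False cF by (simp add: w_def)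
      define M where "M = w powr th"
      have M1: "1 \<le> M" using w1 th by (simp add: M_def ge_one_powr_ge_zero)
      define s where "s = d / M"
      have s: "0 < s" "s \<le> d" using d M1 by (auto simp: s_def divide_le_eq)
      have "F d \<le> cF * (d / s) powr g2 * F s" using FU[OF s] .
      also have "d / s = M" using d M1 by (simp add: s_def)
      also have "M powr g2 = M * w"
      proof -
        have "M powr g2 = M powr (1 + (g2 - 1))" by simp
        also have "\<dots> = M powr 1 * M powr (g2 - 1)" by (rule powr_add)
        also have "\<dots> = M * M powr (g2 - 1)" using M1 by simp
        also have "M powr (g2 - 1) = w" using gam w1 by (simp add: M_def th_def powr_powr)
        finally show ?thesis .
      qed
      finally have Fd: "F d \<le> cF * (M * w) * F s" .
      have "t / F s \<le> M / 2"
      proof -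
        have le1: "t * F d \<le> t * (cF * (M * w) * F s)" using Fd t by (intro mult_left_mono) auto
        have eq: "cF * w * t = F d / 2"
          using cF t by (simp add: w_def u_def field_simps)
        have "t * (cF * (M * w) * F s) = M * F s * (cF * w * t)" by (simp add: algebra_simps)
        also have "\<dots> = F d * (M / 2 * F s)" using eq by simp
        finally have "t * F d \<le> F d * (M / 2 * F s)" using le1 by linarith
        then have "F d * t \<le> F d * (M / 2 * F s)" by (simp only: mult.commute)
        then have "t \<le> M / 2 * F s" using F_pos[OF d] by (simp add: mult_le_cancel_left_pos)
        then show ?thesis using F_pos[OF s(1)] by (simp add: pos_divide_le_eq)
      qed
      moreover have "d / s - t / F s \<le> F1 F d t" using F1_ge[OF _ t(1) s(1)] d by simp
      moreover have "d / s = M" using d M1 by (simp add: s_def)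
      ultimately have F1M: "M / 2 \<le> F1 F d t" by simp
      have e: "exp (- a0 * F1 F d t) \<le> exp (- (a0 / 2 * M))" using F1M a0 by simp
      have "u powr p = (2 * cF) powr p * w powr p" using cF by (simp add: w_def powr_mult[symmetric])
      also have "\<dots> \<le> (2 * cF) powr p * (Ke * exp (a0 / 2 * M))"
        using Ke(2)[of w] w1 by (intro mult_left_mono) (auto simp: M_def)
      finally have "u powr p * exp (- a0 * F1 F d t) \<le> (2 * cF) powr p * (Ke * exp (a0 / 2 * M)) * exp (- (a0 / 2 * M))"
        using e Ke(1) by (intro mult_mono) auto
      also have "\<dots> = K0" by (simp add: K0_def exp_minus field_simps)
      finally show ?thesis by (simp add: u_def)
    qed
  qed
  then show ?thesis using K0 by blast
qed

end

lemma nn_powr_tail: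
  fixes a e C :: real
  assumes "e < -1" "a > 0" "0 \<le> C"
  shows "(\<integral>\<^sup>+ x. ennreal (C * x powr e) * indicator {a..} x \<partial>lborel) = ennreal (C * (-(a powr (e+1)) / (e+1)))"
proof -
  have "((\<lambda>x. if x \<in> {a..} then C * x powr e else 0) has_integral C * (-(a powr (e+1)) / (e+1))) UNIV"
    by (subst has_integral_restrict_UNIV) (intro has_integral_mult_right has_integral_powr_to_inf[OF assms(1,2)])
  then have "(\<integral>\<^sup>+ x. ennreal (if x \<in> {a..} then C * x powr e else 0) \<partial>lborel) = ennreal (C * (-(a powr (e+1)) / (e+1)))"
    using assms(3) by (intro nn_integral_has_integral_lborel) auto
  moreover have "(\<lambda>x. ennreal (C * x powr e) * indicator {a..} x) = (\<lambda>x. ennreal (if x \<in> {a..} then C * x powr e else 0))"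
    by (auto simp: indicator_def)
  ultimately show ?thesis by simp
qed

lemma V_facts:
  fixes \<mu> :: "'a::{heine_borel, second_countable_topology} measure"
  assumes sets_mu: "sets \<mu> = sets borel"
    and radon: "\<And>K. compact K \<Longrightarrow> emeasure \<mu> K < \<infinity>"
    and full_support: "\<And>x r. 0 < r \<Longrightarrow> emeasure \<mu> (ball x r) > 0"
  shows V_pos: "\<And>x r. 0 < r \<Longrightarrow> 0 < V \<mu> x r"
    and V_mono: "\<And>x r R. r \<le> R \<Longrightarrow> V \<mu> x r \<le> V \<mu> x R"
proof -
  have sets: "ball x r \<in> sets \<mu>" for x r using sets_mu by simp
  have fin: "emeasure \<mu> (ball x r) < \<infinity>" for x r
  proof -
    have "emeasure \<mu> (ball x r) \<le> emeasure \<mu> (cball x r)"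
      using sets_mu by (intro emeasure_mono) auto
    also have "\<dots> < \<infinity>" by (rule radon) simp
    finally show ?thesis .
  qed
  show "0 < V \<mu> x r" if "0 < r" for x r
    unfolding V_def measure_def using full_support[OF that, of x] fin[of x r]
    by (simp add: enn2real_positive_iff)
  show "V \<mu> x r \<le> V \<mu> x R" if "r \<le> R" for x r R
    unfolding V_def using that sets fin
    by (intro measure_mono_fmeasurable fmeasurableI) auto
qed


theorem lemma4p2:
  fixes \<mu> :: "'a::{heine_borel, second_countable_topology} measure"
    and d2 \<gamma>1 \<gamma>2 cF \<beta>1 \<beta>2 CL CU :: real
    and F \<psi> :: "real \<Rightarrow> real"
    and q :: "real \<Rightarrow> 'a \<Rightarrow> 'a \<Rightarrow> real"
  assumes sets_mu: "sets \<mu> = sets borel"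
    and radon: "\<And>K. compact K \<Longrightarrow> emeasure \<mu> K < \<infinity>"
    and full_support: "\<And>x r. 0 < r \<Longrightarrow> emeasure \<mu> (ball x r) > 0"
    and infinite_mass: "emeasure \<mu> (space \<mu>) = \<infinity>"
    and vd: "VD \<mu> d2"
    and F_pos: "\<And>s. 0 < s \<Longrightarrow> 0 < F s"
    and F_strict: "strict_mono_on {0<..} F"
    and cF: "0 < cF"
    and gamma: "1 < \<gamma>1" "\<gamma>1 \<le> \<gamma>2"
    and F_L: "L_scale \<gamma>1 (1 / cF) F"
    and F_U: "U_scale \<gamma>2 cF F"
    and diff: "Diff \<mu> F q"
    and beta: "0 < \<beta>1" "\<beta>1 \<le> \<beta>2"
    and CLU: "0 < CL" "0 < CU"
    and psi_pos: "\<And>s. 0 < s \<Longrightarrow> 0 < \<psi> s"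
    and psi_mono: "mono_on {0<..} \<psi>"
    and psi_L: "L_scale \<beta>1 CL \<psi>"
    and psi_U: "U_scale \<beta>2 CU \<psi>"
    and psi_int: "stieltjes_int01 F \<psi> < \<infinity>"
  shows "\<exists>Cbar>1. \<forall>x y. x \<noteq> y \<longrightarrow>
           ennreal (inverse Cbar / (V \<mu> x (dist x y) * \<psi> (dist x y))) \<le> Jpsi q F \<psi> x y \<and>
           Jpsi q F \<psi> x y \<le> ennreal (Cbar / (V \<mu> x (dist x y) * \<psi> (dist x y)))"
proof -
  interpret Fctx F cF \<gamma>1 \<gamma>2
    by unfold_locales (use F_pos F_strict cF gamma F_L F_U in auto)
  have Vpos: "0 < V \<mu> x r" if "0 < r" for x r
    by (rule V_pos[of \<mu>]) (use sets_mu radon full_support that in auto)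
  have Vmono: "V \<mu> x r \<le> V \<mu> x R" if "r \<le> R" for x r R
    by (rule V_mono[of \<mu>]) (use sets_mu radon full_support that in auto)
  have "\<exists>c\<ge>1. \<exists>a0>0. \<forall>t x y. 0 < t \<longrightarrow>
        (if F (dist x y) \<le> t then 1 else 0) / (c * V \<mu> x (Finv F t)) \<le> q t x y \<and>
        q t x y \<le> c / V \<mu> x (Finv F t) * exp (- a0 * F1 F (dist x y) t)"
    using diff unfolding Diff_def by (elim conjE) assumption
  then obtain c a0 where c: "c \<ge> 1" "a0 > 0" and qb0: "\<forall>t x y. 0 < t \<longrightarrow>
        (if F (dist x y) \<le> t then 1 else 0) / (c * V \<mu> x (Finv F t)) \<le> q t x y \<and>
        q t x y \<le> c / V \<mu> x (Finv F t) * exp (- a0 * F1 F (dist x y) t)"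
    by blast
  have qb: "(if F (dist x y) \<le> t then 1 else 0) / (c * V \<mu> x (Finv F t)) \<le> q t x y \<and>
        q t x y \<le> c / V \<mu> x (Finv F t) * exp (- a0 * F1 F (dist x y) t)" if "0 < t" for t x y
    using qb0 that by blast
  obtain CV where CV: "CV \<ge> 1" and vd0: "\<And>x r R. 0 < r \<Longrightarrow> r \<le> R \<Longrightarrow>
       V \<mu> x R / V \<mu> x r \<le> CV * (R / r) powr d2"
    using vd unfolding VD_def by blast
  define D where "D = max d2 0"
  have D: "0 \<le> D" by (simp add: D_def)
  have VD: "V \<mu> x R \<le> CV * (R / r) powr D * V \<mu> x r" if "0 < r" "r \<le> R" for x r R
  proof -
    have "V \<mu> x R / V \<mu> x r \<le> CV * (R / r) powr d2" using vd0 that by blast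
    also have "\<dots> \<le> CV * (R / r) powr D"
      using that CV by (intro mult_left_mono powr_mono) (auto simp: D_def)
    finally show ?thesis using Vpos[OF that(1), of x] by (simp add: pos_divide_le_eq)
  qed
  have CL1: "CL \<le> 1" using Lsc_le1[OF psi_L psi_pos] .
  have CU1: "1 \<le> CU" using Usc_ge1[OF psi_U psi_pos] .
  have psiL: "CL * (R / r) powr \<beta>1 * \<psi> r \<le> \<psi> R" if "0 < r" "r \<le> R" for r R
    using Lsc[OF psi_L psi_pos that] .
  have psiU: "\<psi> R \<le> CU * (R / r) powr \<beta>2 * \<psi> r" if "0 < r" "r \<le> R" for r R
    using Usc[OF psi_U psi_pos that] .
  have psim: "\<psi> r \<le> \<psi> R" if "0 < r" "r \<le> R" for r R
    using mono_onD[OF psi_mono] that by auto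
  define K where "K = (3 * cF) powr (1 / \<gamma>1)"
  have K1: "1 \<le> K" using cF1 gamma by (simp add: K_def ge_one_powr_ge_zero)
  have KK: "K powr \<gamma>1 = 3 * cF" using gamma cF by (simp add: K_def powr_powr)
  define Clow where "Clow = 2 * c * CV * K powr D * CU * K powr \<beta>2"
  have Clow: "0 < Clow" using c CV CU1 K1 by (simp add: Clow_def)
  define p where "p = (D + \<beta>2) / \<gamma>1"
  have p: "0 \<le> p" using D beta gamma by (simp add: p_def)
  obtain K0 where K0: "K0 > 0" and K0b: "\<And>d t. 0 < d \<Longrightarrow> 0 < t \<Longrightarrow> t < F d \<Longrightarrow>
           (F d / t) powr (p + 1) * exp (- a0 * F1 F d t) \<le> K0"
    using key_exp[OF c(2), of "p + 1"] p by auto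
  define A1 where "A1 = c * CV * CU * cF powr p * K0"
  have A1: "0 < A1" using c CV CU1 K0 cF by (simp add: A1_def)
  define a where "a = \<beta>1 / \<gamma>2"
  have a: "0 < a" using beta gamma by (simp add: a_def)
  define B where "B = c * exp a0 / CL"
  have B: "0 < B" using c CLU by (simp add: B_def)
  define Cup where "Cup = A1 + B * cF powr a / a"
  have Cup: "0 < Cup" using A1 B a cF unfolding Cup_def
    by (intro add_pos_nonneg divide_nonneg_pos mult_nonneg_nonneg) auto
  define Cbar where "Cbar = max 2 (max Clow Cup)"
  have Cbar: "1 < Cbar" "Clow \<le> Cbar" "Cup \<le> Cbar" by (auto simp: Cbar_def)
  have main: "ennreal (inverse Cbar / (V \<mu> x (dist x y) * \<psi> (dist x y))) \<le> Jpsi q F \<psi> x y \<and>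
           Jpsi q F \<psi> x y \<le> ennreal (Cbar / (V \<mu> x (dist x y) * \<psi> (dist x y)))"
    if xy: "x \<noteq> y" for x y
  proof -
    define d where "d = dist x y"
    have d: "0 < d" using xy by (simp add: d_def)
    define V0 where "V0 = V \<mu> x d"
    define P where "P = \<psi> d"
    define Fd where "Fd = F d"
    have V0: "0 < V0" using Vpos d by (simp add: V0_def)
    have P: "0 < P" using psi_pos d by (simp add: P_def)
    have Fd: "0 < Fd" using F_pos d by (simp add: Fd_def)
    define f where "f t = q t x y / (t * \<psi> (Finv F t))" for t
    have J: "Jpsi q F \<psi> x y = (\<integral>\<^sup>+ t. ennreal (f t) * indicator {0<..} t \<partial>lborel)"
      by (simp add: Jpsi_def f_def)
    have qd: "q t x y \<le> c / V \<mu> x (Finv F t) * exp (- a0 * F1 F d t)" if "0 < t" for t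
      using qb[OF that, of x y] by (simp add: d_def)
    have ql: "1 / (c * V \<mu> x (Finv F t)) \<le> q t x y" if "0 < t" "Fd \<le> t" for t
      using qb[OF that(1), of x y] that by (simp add: d_def Fd_def)
    have lowpt: "ennreal (1 / (Clow * V0 * P * Fd)) * indicator {Fd..2*Fd} t \<le> ennreal (f t) * indicator {0<..} t" for t
    proof (cases "t \<in> {Fd..2*Fd}")
      case False
      then show ?thesis by simp
    next
      case True
      then have t: "0 < t" "Fd \<le> t" "t \<le> 2 * Fd" using Fd by auto
      have g1: "d \<le> Finv F t" using Finv_ge[OF d] t by (simp add: Fd_def)
      have dK: "d \<le> K * d" using K1 d by simp
      have "(1/cF) * (K * d / d) powr \<gamma>1 * F d \<le> F (K * d)" using FL[OF d dK] .
      moreover have "(1/cF) * (K * d / d) powr \<gamma>1 * F d = 3 * Fd" using d KK cF by (simp add: Fd_def)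
      ultimately have "t < F (K * d)" using t Fd by linarith
      then have g2: "Finv F t \<le> K * d" using Finv_le[OF t(1)] d K1 by simp
      have fp: "0 < Finv F t" using g1 d by linarith
      define Vf where "Vf = V \<mu> x (Finv F t)"
      define Pf where "Pf = \<psi> (Finv F t)"
      have Vf: "0 < Vf" using Vpos fp by (simp add: Vf_def)
      have Pf: "0 < Pf" using psi_pos fp by (simp add: Pf_def)
      have "Vf \<le> V \<mu> x (K * d)" using Vmono g2 by (simp add: Vf_def)
      also have "\<dots> \<le> CV * (K * d / d) powr D * V0" using VD[OF d dK] by (simp add: V0_def)
      finally have Vf2: "Vf \<le> CV * K powr D * V0" using d by simp
      have "Pf \<le> \<psi> (K * d)" using psim fp g2 by (simp add: Pf_def)
      also have "\<dots> \<le> CU * (K * d / d) powr \<beta>2 * P" using psiU[OF d dK] by (simp add: P_def)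
      finally have Pf2: "Pf \<le> CU * K powr \<beta>2 * P" using d by simp
      have "c * Vf * (t * Pf) \<le> c * (CV * K powr D * V0) * (2 * Fd * (CU * K powr \<beta>2 * P))"
        using Vf2 Pf2 t c Vf Pf by (intro mult_mono) auto
      also have "\<dots> = Clow * V0 * P * Fd" by (simp add: Clow_def)
      finally have den: "c * Vf * (t * Pf) \<le> Clow * V0 * P * Fd" .
      have "1 / (Clow * V0 * P * Fd) \<le> 1 / (c * Vf * (t * Pf))"
        using den c Vf Pf t Clow V0 P Fd by (intro divide_left_mono) auto
      also have "\<dots> = (1 / (c * Vf)) / (t * Pf)" by simp
      also have "\<dots> \<le> q t x y / (t * Pf)"
        using ql[OF t(1,2)] t Pf by (intro divide_right_mono) (auto simp: Vf_def)
      finally have "1 / (Clow * V0 * P * Fd) \<le> f t" by (simp add: f_def Pf_def)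
      then show ?thesis using True t by (simp add: ennreal_leI)
    qed
    have "ennreal (inverse Cbar / (V0 * P)) \<le> ennreal (1 / (Clow * V0 * P * Fd) * Fd)"
    proof (rule ennreal_leI)
      have "inverse Cbar \<le> 1 / Clow" using Cbar Clow by (simp add: inverse_eq_divide divide_left_mono)
      then have "inverse Cbar / (V0 * P) \<le> (1 / Clow) / (V0 * P)"
        using V0 P by (intro divide_right_mono) auto
      moreover have "1 / (Clow * V0 * P * Fd) * Fd = (1 / Clow) / (V0 * P)" using Fd by simp
      ultimately show "inverse Cbar / (V0 * P) \<le> 1 / (Clow * V0 * P * Fd) * Fd" by simp
    qed
    also have "\<dots> = ennreal (1 / (Clow * V0 * P * Fd)) * ennreal Fd"
      using Fd Clow V0 P by (intro ennreal_mult) auto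
    also have "\<dots> = (\<integral>\<^sup>+ t. ennreal (1 / (Clow * V0 * P * Fd)) * indicator {Fd..2*Fd} t \<partial>lborel)"
      using Fd by (simp add: nn_integral_cmult_indicator)
    also have "\<dots> \<le> (\<integral>\<^sup>+ t. ennreal (f t) * indicator {0<..} t \<partial>lborel)"
      by (intro nn_integral_mono lowpt)
    finally have LOW: "ennreal (inverse Cbar / (V0 * P)) \<le> Jpsi q F \<psi> x y" using J by simp
    have small: "f t \<le> A1 / (Fd * V0 * P)" if t: "0 < t" "t < Fd" for t
    proof -
      have g2: "Finv F t \<le> d" using Finv_le[OF t(1) d] t by (simp add: Fd_def)
      have fp: "0 < Finv F t" using Finv_pos[OF t(1)] .
      define z where "z = t / (cF * Fd)"
      have "Fd \<le> Fd * cF" using Fd cF1 by simp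
      then have "t \<le> Fd * cF" using t by linarith
      then have z: "0 < z" "z \<le> 1" using t cF Fd by (auto simp: z_def field_simps)
      define s0 where "s0 = d * z powr (1 / \<gamma>1)"
      have zp: "z powr (1 / \<gamma>1) \<le> 1" using z gamma powr_mono2[of "1/\<gamma>1" z 1] by simp
      have s0: "0 < s0" "s0 \<le> d" using d z zp by (auto simp: s0_def mult_le_cancel_left1)
      have "(1/cF) * (d / s0) powr \<gamma>1 * F s0 \<le> F d" using FL[OF s0] .
      moreover have "(d / s0) powr \<gamma>1 = 1 / z"
        using d z gamma by (simp add: s0_def powr_divide powr_powr)
      ultimately have "(1/cF) * (1 / z) * F s0 \<le> Fd" by (simp add: Fd_def)
      then have "F s0 \<le> t" using z cF Fd F_pos[OF s0(1)] by (simp add: z_def field_simps)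
      then have g1: "s0 \<le> Finv F t" using Finv_ge[OF s0(1)] by simp
      define R where "R = d / Finv F t"
      have R1: "1 \<le> R" using g2 fp by (simp add: R_def)
      define u where "u = Fd / t"
      have u: "1 < u" using t by (simp add: u_def)
      have "R \<le> d / s0" unfolding R_def using g1 s0 d fp by (intro divide_left_mono) auto
      also have "d / s0 = 1 / z powr (1 / \<gamma>1)" using d by (simp add: s0_def)
      also have "\<dots> = (1 / z) powr (1 / \<gamma>1)" using z by (simp add: powr_divide)
      also have "1 / z = cF * u" by (simp add: z_def u_def)
      finally have Ru: "R \<le> (cF * u) powr (1 / \<gamma>1)" .
      define Vf where "Vf = V \<mu> x (Finv F t)"
      define Pf where "Pf = \<psi> (Finv F t)"
      have Vf: "0 < Vf" using Vpos fp by (simp add: Vf_def)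
      have Pf: "0 < Pf" using psi_pos fp by (simp add: Pf_def)
      have V0le: "V0 \<le> CV * R powr D * Vf" using VD[OF fp g2] by (simp add: V0_def Vf_def R_def)
      have Ple: "P \<le> CU * R powr \<beta>2 * Pf" using psiU[OF fp g2] by (simp add: P_def Pf_def R_def)
      have "V0 * P \<le> (CV * R powr D * Vf) * (CU * R powr \<beta>2 * Pf)"
        using V0le Ple V0 P by (intro mult_mono) auto
      also have "\<dots> = CV * CU * R powr (D + \<beta>2) * (Vf * Pf)" by (simp add: powr_add)
      also have "R powr (D + \<beta>2) \<le> ((cF * u) powr (1 / \<gamma>1)) powr (D + \<beta>2)"
        using Ru R1 D beta by (intro powr_mono2) auto
      also have "((cF * u) powr (1 / \<gamma>1)) powr (D + \<beta>2) = cF powr p * u powr p"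
        using cF u by (simp add: powr_powr p_def powr_mult)
      finally have VP: "V0 * P \<le> CV * CU * (cF powr p * u powr p) * (Vf * Pf)"
        using CV CU1 Vf Pf by (simp add: mult_left_mono mult_right_mono)
      define E where "E = exp (- a0 * F1 F d t)"
      have E: "0 < E" by (simp add: E_def)
      have qE: "q t x y \<le> c / Vf * E" using qd[OF t(1)] by (simp add: E_def Vf_def)
      have uE: "u powr p * u * E \<le> K0"
      proof -
        have "u powr (p + 1) * E \<le> K0" using K0b[OF d t(1)] t by (simp add: E_def u_def Fd_def)
        moreover have "u powr (p + 1) = u powr p * u" using u by (simp add: powr_add)
        ultimately show ?thesis by simp
      qed
      have "c * E * Fd * (V0 * P) \<le> c * E * Fd * (CV * CU * (cF powr p * u powr p) * (Vf * Pf))"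
        using VP c E Fd by (intro mult_left_mono) auto
      also have "\<dots> = c * CV * CU * cF powr p * (u powr p * u * E) * (t * Vf * Pf)"
        using t by (simp add: u_def field_simps)
      also have "\<dots> \<le> c * CV * CU * cF powr p * K0 * (t * Vf * Pf)"
        using uE c CV CU1 cF t Vf Pf by (intro mult_right_mono mult_left_mono) auto
      finally have main: "c * E * Fd * (V0 * P) \<le> A1 * (t * Vf * Pf)" by (simp add: A1_def)
      have "f t \<le> (c / Vf * E) / (t * Pf)"
        unfolding f_def Pf_def using qE t Pf by (intro divide_right_mono) (auto simp: Pf_def)
      also have "\<dots> \<le> A1 / (Fd * V0 * P)"
        using main t Vf Pf Fd V0 P by (simp add: field_simps)
      finally show ?thesis .
    qed
    have large: "f t \<le> B / (V0 * P) * (cF * Fd) powr a * t powr (-1 - a)" if t: "0 < t" "Fd \<le> t" for t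
    proof -
      have g1: "d \<le> Finv F t" using Finv_ge[OF d] t by (simp add: Fd_def)
      have fp: "0 < Finv F t" using g1 d by linarith
      define z where "z = t / (cF * Fd)"
      have z: "0 < z" using t cF Fd by (simp add: z_def)
      define s1 where "s1 = d * z powr (1 / \<gamma>2)"
      have s1p: "0 < s1" using d z by (simp add: s1_def)
      have g3: "s1 \<le> Finv F t"
      proof (cases "s1 \<le> d")
        case True then show ?thesis using g1 by linarith
      next
        case False
        then have ds: "d \<le> s1" by simp
        have "F s1 \<le> cF * (s1 / d) powr \<gamma>2 * F d" using FU[OF d ds] .
        also have "(s1 / d) powr \<gamma>2 = z" using d z gamma by (simp add: s1_def powr_powr)
        finally have "F s1 \<le> t" using cF Fd by (simp add: z_def Fd_def)
        then show ?thesis using Finv_ge[OF s1p] by simp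
      qed
      define Vf where "Vf = V \<mu> x (Finv F t)"
      define Pf where "Pf = \<psi> (Finv F t)"
      have Vf: "V0 \<le> Vf" using Vmono g1 by (simp add: V0_def Vf_def)
      have "CL * (Finv F t / d) powr \<beta>1 * P \<le> Pf" using psiL[OF d g1] by (simp add: P_def Pf_def)
      moreover have "(s1 / d) powr \<beta>1 \<le> (Finv F t / d) powr \<beta>1"
        using g3 s1p d beta by (intro powr_mono2 divide_right_mono) auto
      moreover have "(s1 / d) powr \<beta>1 = z powr a" using d z gamma by (simp add: s1_def powr_powr a_def)
      ultimately have "CL * z powr a * P \<le> Pf" using CLU P
        by (smt (verit) mult_left_mono mult_right_mono)
      then have Pf: "CL * z powr a * P \<le> Pf" .
      have den0: "0 < CL * z powr a * P" using CLU z P by simp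
      define E where "E = exp (- a0 * F1 F d t)"
      have "a0 * (-1) \<le> a0 * F1 F d t" using F1_ge_m1[of d t] d t c by (intro mult_left_mono) auto
      then have E: "E \<le> exp a0" by (simp add: E_def)
      have qE: "q t x y \<le> c / Vf * exp a0"
      proof -
        have "q t x y \<le> c / Vf * E" using qd[OF t(1)] by (simp add: E_def Vf_def)
        also have "\<dots> \<le> c / Vf * exp a0" using E c Vf V0 by (intro mult_left_mono) auto
        finally show ?thesis .
      qed
      have "f t \<le> (c / Vf * exp a0) / (t * Pf)"
        unfolding f_def Pf_def using qE t Pf den0 by (intro divide_right_mono) (auto simp: Pf_def)
      also have "\<dots> \<le> (c / V0 * exp a0) / (t * (CL * z powr a * P))"
        using Vf V0 Pf den0 t c by (intro frac_le mult_left_mono mult_right_mono divide_left_mono) auto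
      also have "\<dots> = B / (V0 * P) * (cF * Fd) powr a * t powr (-1 - a)"
      proof -
        have zeq: "z powr a = t powr a / (cF * Fd) powr a" using t cF Fd by (simp add: z_def powr_divide)
        have teq: "t powr (-1 - a) = 1 / (t * t powr a)" using t
          by (simp add: powr_diff powr_minus divide_inverse)
        have p1: "0 < t powr a" "0 < (cF * Fd) powr a" using t cF Fd by auto
        show ?thesis unfolding zeq teq using t cF Fd CLU V0 P p1 by (simp add: B_def field_simps)
      qed
      finally show ?thesis .
    qed
    define C2 where "C2 = B / (V0 * P) * (cF * Fd) powr a"
    have C2: "0 \<le> C2" using B V0 P by (simp add: C2_def)
    have uppt: "ennreal (f t) * indicator {0<..} t \<le> ennreal (A1 / (Fd * V0 * P)) * indicator {0<..<Fd} t
        + ennreal (C2 * t powr (-1 - a)) * indicator {Fd..} t" for t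
    proof -
      consider "t \<le> 0" | "0 < t" "t < Fd" | "0 < t" "Fd \<le> t" by linarith
      then show ?thesis
      proof cases
        case 1 then show ?thesis by simp
      next
        case 2 then show ?thesis using small[OF 2] by (simp add: ennreal_leI)
      next
        case 3 then show ?thesis using large[OF 3] by (simp add: ennreal_leI C2_def)
      qed
    qed
    have "Jpsi q F \<psi> x y \<le> (\<integral>\<^sup>+ t. ennreal (A1 / (Fd * V0 * P)) * indicator {0<..<Fd} t
        + ennreal (C2 * t powr (-1 - a)) * indicator {Fd..} t \<partial>lborel)"
      unfolding J by (intro nn_integral_mono uppt)
    also have "\<dots> = (\<integral>\<^sup>+ t. ennreal (A1 / (Fd * V0 * P)) * indicator {0<..<Fd} t \<partial>lborel)
        + (\<integral>\<^sup>+ t. ennreal (C2 * t powr (-1 - a)) * indicator {Fd..} t \<partial>lborel)"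
      by (intro nn_integral_add) measurable
    also have "(\<integral>\<^sup>+ t. ennreal (A1 / (Fd * V0 * P)) * indicator {0<..<Fd} t \<partial>lborel)
        = ennreal (A1 / (Fd * V0 * P)) * ennreal Fd"
      using Fd by (simp add: nn_integral_cmult_indicator)
    also have "\<dots> = ennreal (A1 / (V0 * P))"
      using Fd A1 V0 P by (simp add: ennreal_mult[symmetric])
    also have "(\<integral>\<^sup>+ t. ennreal (C2 * t powr (-1 - a)) * indicator {Fd..} t \<partial>lborel)
        = ennreal (C2 * (-(Fd powr (-1 - a + 1)) / (-1 - a + 1)))"
      using a Fd C2 by (intro nn_powr_tail) auto
    also have "C2 * (-(Fd powr (-1 - a + 1)) / (-1 - a + 1)) = B * cF powr a / a / (V0 * P)"
    proof -
      have "(cF * Fd) powr a * Fd powr (- a) = cF powr a"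
        using cF Fd by (simp add: powr_mult powr_minus)
      then show ?thesis using a V0 P by (simp add: C2_def field_simps)
    qed
    also have "ennreal (A1 / (V0 * P)) + ennreal (B * cF powr a / a / (V0 * P)) = ennreal (Cup / (V0 * P))"
    proof -
      have "ennreal (A1 / (V0 * P)) + ennreal (B * cF powr a / a / (V0 * P)) = ennreal (A1 / (V0 * P) + B * cF powr a / a / (V0 * P))"
        using A1 B a V0 P cF by (intro ennreal_plus[symmetric]) auto
      also have "A1 / (V0 * P) + B * cF powr a / a / (V0 * P) = Cup / (V0 * P)"
        unfolding Cup_def by (rule add_divide_distrib[symmetric])
      finally show ?thesis .
    qed
    also have "\<dots> \<le> ennreal (Cbar / (V0 * P))"
      using Cbar V0 P by (intro ennreal_leI divide_right_mono) auto
    finally have UP: "Jpsi q F \<psi> x y \<le> ennreal (Cbar / (V0 * P))" .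
    show ?thesis using LOW UP by (simp add: V0_def P_def d_def)
  qed
  show ?thesis using main Cbar(1) by blast
qed

end
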